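(* Let $\nabla$ be a symplectic self-duality of a locally compact abelian group $L$. If $L$ has a compact open subgroup, then $L$ has a compact open subgroup $G$ with $G=\{x\in L:\nabla(x)(g)=0\ \text{for all } g\in G\}$ (i.e. a compact open maximal isotropic subgroup).
   Context: $\mathbf T=\mathbf R/\mathbf Z$; $\hat L$ is the Pontryagin dual of a locally compact abelian group $L$. A symplectic self-duality of $L$ is an isomorphism of topological groups $\nabla:L\to\hat L$ with $\nabla(x)(x)=0$ for all $x\in L$. A subgroup $N$ is isotropic if $\nabla(x)(y)=0$ for all $x,y\in N$. *)

theory Defs
  imports "HOL-Analysis.Analysis"
begin

text \<open>The circle group T = R/Z is represented (isomorphically, as a topological group)
  by the unit circle in the complex plane, written multiplicatively; the element 0 of T
  corresponds to 1.\<close>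

definition add_subgroup :: "'a::ab_group_add set \<Rightarrow> bool" where
  "add_subgroup H \<longleftrightarrow> 0 \<in> H \<and> (\<forall>x\<in>H. \<forall>y\<in>H. x + y \<in> H) \<and> (\<forall>x\<in>H. - x \<in> H)"

definition character :: "('a::{topological_space, ab_group_add} \<Rightarrow> complex) \<Rightarrow> bool" where
  "character c \<longleftrightarrow> continuous_on UNIV c \<and> (\<forall>x. norm (c x) = 1)
      \<and> (\<forall>x y. c (x + y) = c x * c y)"

definition pontryagin_dual :: "('a::{topological_space, ab_group_add} \<Rightarrow> complex) set" where
  "pontryagin_dual = {c. character c}"

definition dual_topology :: "('a::{topological_space, ab_group_add} \<Rightarrow> complex) topology" where
  "dual_topology = subtopology
      (topology_generated_by {{f. f ` K \<subseteq> U} | K U. compact K \<and> open U})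
      pontryagin_dual"

definition symplectic_self_duality :: "('a::{topological_space, ab_group_add} \<Rightarrow> 'a \<Rightarrow> complex) \<Rightarrow> bool" where
  "symplectic_self_duality nabla \<longleftrightarrow>
      homeomorphic_map euclidean dual_topology nabla
    \<and> (\<forall>x y. nabla (x + y) = (\<lambda>g. nabla x g * nabla y g))
    \<and> (\<forall>x. nabla x x = 1)"

end

theory Submission
  imports Defs
begin


definition perp :: "('a \<Rightarrow> 'a \<Rightarrow> complex) \<Rightarrow> 'a set \<Rightarrow> 'a set" where
  "perp N S = {x. \<forall>g\<in>S. N x g = 1}"

lemma circ_step:
  fixes z :: complex
  assumes "norm z = 1" "norm (z - 1) < 1"
  shows "norm (z^2 - 1) \<ge> 3/2 * norm (z - 1)"
proof -
  have e: "(Re z)^2 + (Im z)^2 = 1" using assms(1) by (metis cmod_power2 one_power2)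
  have a: "(norm (z - 1))^2 = (Re z - 1)^2 + (Im z)^2" by (simp add: cmod_power2)
  have b: "(norm (z + 1))^2 = (Re z + 1)^2 + (Im z)^2" by (simp add: cmod_power2)
  have "(norm (z - 1))^2 < 1" using assms(2) by (simp add: power_less_one_iff)
  then have "(norm (z + 1))^2 > (3/2)^2" using a b e by (simp add: power2_eq_square algebra_simps)
  then have n: "norm (z + 1) \<ge> 3/2"
    by (meson less_imp_le norm_ge_zero power_less_imp_less_base)
  have "z^2 - 1 = (z - 1) * (z + 1)" by (simp add: power2_eq_square algebra_simps)
  then have "norm (z^2 - 1) = norm (z - 1) * norm (z + 1)" by (simp add: norm_mult)
  also have "\<dots> \<ge> norm (z - 1) * (3/2)" by (rule mult_left_mono[OF n norm_ge_zero])
  finally show ?thesis by simp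
qed

lemma circ_trivial:
  fixes z :: complex
  assumes "norm z = 1" and small: "\<And>k. norm (z^(2^k) - 1) < 1"
  shows "z = 1"
proof (rule ccontr)
  assume "z \<noteq> 1"
  then have d: "norm (z - 1) > 0" by simp
  have grow: "norm (z^(2^k) - 1) \<ge> (3/2)^k * norm (z - 1)" for k
  proof (induction k)
    case 0 then show ?case by simp
  next
    case (Suc k)
    have u: "norm (z^(2^k)) = 1" using assms(1) by (simp add: norm_power)
    have "(3/2)^Suc k * norm (z - 1) = 3/2 * ((3/2)^k * norm (z - 1))" by simp
    also have "\<dots> \<le> 3/2 * norm (z^(2^k) - 1)" by (rule mult_left_mono[OF Suc.IH]) simp
    also have "\<dots> \<le> norm ((z^(2^k))^2 - 1)" by (rule circ_step[OF u small])
    also have "(z^(2^k))^2 = z^(2^Suc k)" by (simp add: power_mult[symmetric] mult.commute)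
    finally show ?case .
  qed
  obtain k where "1 / norm (z - 1) < (3/2::real)^k" using real_arch_pow[of "3/2" "1 / norm (z - 1)"] by auto
  then have "1 < (3/2)^k * norm (z - 1)" using d by (simp add: field_simps)
  moreover have "(3/2)^k * norm (z - 1) \<le> norm (z^(2^k) - 1)" by (rule grow)
  moreover have "norm (z^(2^k) - 1) < 1" by (rule small)
  ultimately show False by linarith
qed


locale ssdl =
  fixes N :: "'a::{topological_group_add, ab_group_add, t2_space} \<Rightarrow> 'a \<Rightarrow> complex"
  assumes ssd: "symplectic_self_duality N"
begin

lemma ssd_char:
  shows "character (N x)"
proof -
  have h: "homeomorphic_map euclidean dual_topology N" using ssd by (simp add: symplectic_self_duality_def)
  have "N x \<in> N ` topspace euclidean" by simp
  also have "\<dots> = topspace dual_topology" using homeomorphic_imp_surjective_map[OF h] .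
  also have "\<dots> \<subseteq> pontryagin_dual" unfolding dual_topology_def by simp
  finally show ?thesis by (simp add: pontryagin_dual_def)
qed

lemma ssd_norm: shows "norm (N x g) = 1"
  using ssd_char by (simp add: character_def)

lemma ssd_add2: shows "N x (g + h) = N x g * N x h"
  using ssd_char by (simp add: character_def)

lemma ssd_add1: shows "N (x + y) g = N x g * N y g"
  using ssd by (simp add: symplectic_self_duality_def)

lemma ssd_alt: shows "N x x = 1"
  using ssd by (simp add: symplectic_self_duality_def)

lemma unit_idem: "norm (z::complex) = 1 \<Longrightarrow> z = z * z \<Longrightarrow> z = 1"
  by (metis mult_cancel_left1 norm_zero zero_neq_one)

lemma ssd_zero1: shows "N 0 g = 1"
  using ssd_add1[of 0 0 g] ssd_norm[of 0 g] unit_idem by (metis add_0)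

lemma ssd_zero2: shows "N x 0 = 1"
  using ssd_add2[of x 0 0] ssd_norm[of x 0] unit_idem by (metis add_0)

lemma unit_cnj: "norm (z::complex) = 1 \<Longrightarrow> z * cnj z = 1"
  by (metis complex_norm_square mult.commute norm_one of_real_1 power_one)

lemma unit_inv: "norm (z::complex) = 1 \<Longrightarrow> z * w = 1 \<Longrightarrow> w = cnj z"
  by (metis mult.commute mult.left_commute mult_1_right unit_cnj)

lemma ssd_neg1: shows "N (-x) g = cnj (N x g)"
  using ssd_add1[of x "-x" g] ssd_zero1 ssd_norm unit_inv by (metis add.right_inverse)

lemma ssd_neg2: shows "N x (-g) = cnj (N x g)"
  using ssd_add2[of x g "-g"] ssd_zero2 ssd_norm unit_inv by (metis add.right_inverse)

lemma ssd_antisym: shows "N x y * N y x = 1"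
proof -
  have "1 = N (x+y) (x+y)" using ssd_alt by simp
  also have "\<dots> = N x x * N x y * (N y x * N y y)" by (simp add: ssd_add1 ssd_add2)
  finally show ?thesis by (simp add: ssd_alt)
qed

lemma perp_subgroup: shows "add_subgroup (perp N S)"
  unfolding add_subgroup_def perp_def
  by (simp add: ssd_zero1 ssd_add1 ssd_neg1)

lemma basic_open:
  assumes C: "compact C" and U: "open U"
  shows "open {x. N x ` C \<subseteq> U}"
proof -
  have c: "continuous_map euclidean dual_topology N" using ssd
    by (simp add: symplectic_self_duality_def homeomorphic_imp_continuous_map)
  let ?T = "{f::'a\<Rightarrow>complex. f ` C \<subseteq> U}"
  have "?T \<in> {{f. f ` K \<subseteq> U} | K U. compact K \<and> open U}"
    apply (rule CollectI, rule exI[of _ C], rule exI[of _ U]) using C U by simp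
  then have "openin (topology_generated_by {{f. f ` K \<subseteq> U} | K U. compact K \<and> open U}) ?T"
    unfolding openin_topology_generated_by_iff by (rule generate_topology_on.Basis)
  then have "openin dual_topology (?T \<inter> pontryagin_dual)"
    unfolding dual_topology_def openin_subtopology by - (rule exI, rule conjI, assumption, rule refl)
  then have "openin euclidean {x \<in> topspace euclidean. N x \<in> ?T \<inter> pontryagin_dual}"
    by (rule openin_continuous_map_preimage[OF c])
  moreover have "{x \<in> topspace euclidean. N x \<in> ?T \<inter> pontryagin_dual} = {x. N x ` C \<subseteq> U}"
    using ssd_char by (auto simp: pontryagin_dual_def)
  ultimately show ?thesis by (simp only: open_openin)
qed

lemma ssd_cont1:
  shows "continuous_on UNIV (\<lambda>x. N x g)"
proof -
  have "\<forall>B. open B \<longrightarrow> open (UNIV \<inter> (\<lambda>x. N x g) -` B)"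
  proof (intro allI impI)
    fix B :: "complex set" assume B: "open B"
    have "open {x. N x ` {g} \<subseteq> B}" by (rule basic_open[OF compact_sing B])
    moreover have "{x. N x ` {g} \<subseteq> B} = UNIV \<inter> (\<lambda>x. N x g) -` B" by auto
    ultimately show "open (UNIV \<inter> (\<lambda>x. N x g) -` B)" by simp
  qed
  then show ?thesis by (simp add: continuous_on_open_vimage[OF open_UNIV])
qed

lemma perp_closed:
  shows "closed (perp N S)"
proof -
  have "perp N S = (\<Inter>g\<in>S. {x. N x g = 1})" by (auto simp: perp_def)
  moreover have "closed {x. N x g = 1}" for g
    using ssd_cont1[of g] by (intro closed_Collect_eq) (auto intro: continuous_intros)
  ultimately show ?thesis by auto
qed

lemma ssd_double: "N x (((\<lambda>y. y + y) ^^ k) h) = (N x h) ^ (2 ^ k)"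
proof (induction k)
  case 0 then show ?case by simp
next
  case (Suc k)
  have "N x (((\<lambda>y. y + y) ^^ Suc k) h) = N x (((\<lambda>y. y + y) ^^ k) h) * N x (((\<lambda>y. y + y) ^^ k) h)"
    by (simp add: ssd_add2)
  also have "\<dots> = ((N x h) ^ (2 ^ k))^2" using Suc by (simp add: power2_eq_square)
  also have "\<dots> = (N x h) ^ (2 ^ Suc k)" by (simp add: power_mult[symmetric] mult.commute)
  finally show ?case .
qed



lemma perp_open:
  assumes H: "add_subgroup H" "compact H"
  shows "open (perp N H)"
proof -
  have "perp N H = {x. N x ` H \<subseteq> ball 1 1}"
  proof (intro set_eqI iffI)
    fix x assume "x \<in> perp N H" then show "x \<in> {x. N x ` H \<subseteq> ball 1 1}" by (auto simp: perp_def)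
  next
    fix x assume x: "x \<in> {x. N x ` H \<subseteq> ball 1 1}"
    have dH: "((\<lambda>y. y + y) ^^ k) h \<in> H" if "h \<in> H" for h k
      using that H(1) by (induction k) (auto simp: add_subgroup_def)
    show "x \<in> perp N H" unfolding perp_def
    proof (intro CollectI ballI)
      fix h assume h: "h \<in> H"
      show "N x h = 1"
      proof (rule circ_trivial)
        show "norm (N x h) = 1" by (rule ssd_norm)
        fix k
        have "N x (((\<lambda>y. y + y) ^^ k) h) \<in> ball 1 1" using x imageI[OF dH[OF h, of k], of "N x"] by blast
        then show "norm (N x h ^ 2 ^ k - 1) < 1"
          by (simp add: ssd_double dist_norm norm_minus_commute)
      qed
    qed
  qed
  then show ?thesis using basic_open[OF H(2) open_ball] by simp
qed

lemma gen_nbhd: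
  assumes "generate_topology_on {{f. f ` K \<subseteq> U} | (K::'b::topological_space set) (U::complex set). compact K \<and> open U} T"
    and "f \<in> T"
  shows "\<exists>F. finite F \<and> (\<forall>p\<in>F. compact (fst p) \<and> open (snd p) \<and> f ` fst p \<subseteq> snd p)
             \<and> {g. \<forall>p\<in>F. g ` fst p \<subseteq> snd p} \<subseteq> T"
  using assms
proof (induction arbitrary: f rule: generate_topology_on.induct)
  case Empty
  then show ?case by simp
next
  case (Int a b)
  obtain F1 where F1: "finite F1" "\<forall>p\<in>F1. compact (fst p) \<and> open (snd p) \<and> f ` fst p \<subseteq> snd p"
    "{g. \<forall>p\<in>F1. g ` fst p \<subseteq> snd p} \<subseteq> a" using Int.IH(1)[of f] Int.prems by blast
  obtain F2 where F2: "finite F2" "\<forall>p\<in>F2. compact (fst p) \<and> open (snd p) \<and> f ` fst p \<subseteq> snd p"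
    "{g. \<forall>p\<in>F2. g ` fst p \<subseteq> snd p} \<subseteq> b" using Int.IH(2)[of f] Int.prems by blast
  have "\<forall>p\<in>F1 \<union> F2. compact (fst p) \<and> open (snd p) \<and> f ` fst p \<subseteq> snd p" using F1(2) F2(2) by blast
  moreover have "{g. \<forall>p\<in>F1 \<union> F2. g ` fst p \<subseteq> snd p} \<subseteq> a \<inter> b" using F1(3) F2(3) by blast
  ultimately show ?case using F1(1) F2(1) by (intro exI[of _ "F1 \<union> F2"]) simp
next
  case (UN K)
  then obtain k where k: "k \<in> K" "f \<in> k" by blast
  then obtain F where F: "finite F" "\<forall>p\<in>F. compact (fst p) \<and> open (snd p) \<and> f ` fst p \<subseteq> snd p"
    "{g. \<forall>p\<in>F. g ` fst p \<subseteq> snd p} \<subseteq> k" using UN.IH[OF k] by (elim exE conjE) (intro that)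
  have "{g. \<forall>p\<in>F. g ` fst p \<subseteq> snd p} \<subseteq> \<Union>K" using F(3) k(1) by blast
  then show ?case using F(1,2) by (intro exI[of _ F]) simp
next
  case (Basis s)
  then obtain K U where s: "s = {f. f ` K \<subseteq> U}" "compact K" "open U" by blast
  show ?case by (rule exI[of _ "{(K, U)}"]) (use s Basis.prems in auto)
qed

lemma finite_uniform_eps:
  assumes "finite F" "\<forall>p\<in>F. \<exists>e>0. P p e"
    and mono: "\<And>p e e'. P p e \<Longrightarrow> 0 < e' \<Longrightarrow> e' \<le> e \<Longrightarrow> P p e'"
  shows "\<exists>e>(0::real). \<forall>p\<in>F. P p e"
  using assms(1,2)
proof (induction rule: finite_induct)
  case empty then show ?case using zero_less_one by blast
next
  case (insert q F)
  obtain e1 where e1: "e1 > 0" "\<forall>p\<in>F. P p e1" using insert by auto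
  obtain e2 where e2: "e2 > 0" "P q e2" using insert.prems by auto
  have "\<forall>p\<in>insert q F. P p (min e1 e2)"
    using e1 e2 mono[of _ e1 "min e1 e2"] mono[of q e2 "min e1 e2"] by auto
  then show ?case using e1 e2 by (intro exI[of _ "min e1 e2"]) auto
qed

lemma unit_dist: "norm (w::complex) = 1 \<Longrightarrow> norm (z * cnj w - 1) = norm (z - w)"
proof -
  assume w: "norm w = 1"
  have "(z * cnj w - 1) * w = z - w" using unit_cnj[OF w] by (simp add: algebra_simps)
  then have "norm ((z * cnj w - 1) * w) = norm (z - w)" by simp
  then show ?thesis using w by (simp add: norm_mult)
qed

lemma translate_eq: "((+) c ` K) = (\<lambda>x. - c + x) -` (K::'c::group_add set)"
proof (intro set_eqI iffI)
  fix y assume "y \<in> (+) c ` K" then show "y \<in> (\<lambda>x. - c + x) -` K" by auto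
next
  fix y assume "y \<in> (\<lambda>x. - c + x) -` K"
  then have "- c + y \<in> K" by simp
  moreover have "y = c + (- c + y)" by (simp add: add.assoc[symmetric])
  ultimately show "y \<in> (+) c ` K" by (metis image_eqI)
qed

lemma translate_open: "open K \<Longrightarrow> open ((+) c ` (K::'c::topological_group_add set))"
proof -
  assume "open K"
  moreover have "continuous_on UNIV (\<lambda>x. - c + x)" by (auto intro: continuous_intros)
  ultimately have "open ((\<lambda>x. - c + x) -` K)" by (rule open_vimage)
  then show ?thesis using translate_eq[of c K] by simp
qed

lemma translate_compact: "compact K \<Longrightarrow> compact ((+) c ` (K::'c::topological_group_add set))"
  by (rule compact_continuous_image) (auto intro: continuous_intros)


end

context ssdl begin
lemma inv_nbhd:
  assumes K: "open K" "0 \<in> K"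
  shows "\<exists>F. finite F \<and> (\<forall>p\<in>F. compact (fst p) \<and> open (snd p) \<and> (fst p \<noteq> {} \<longrightarrow> 1 \<in> snd p))
             \<and> (\<forall>x. (\<forall>p\<in>F. N x ` fst p \<subseteq> snd p) \<longrightarrow> x \<in> K)"
proof -
  have h: "homeomorphic_map euclidean dual_topology N" using ssd by (simp add: symplectic_self_duality_def)
  have "openin dual_topology (N ` K)"
    using homeomorphic_map_openness[OF h, of K] K(1) by simp
  then obtain T where oT: "openin (topology_generated_by {{f. f ` K \<subseteq> U} | (K::'a set) (U::complex set). compact K \<and> open U}) T"
    and eq: "N ` K = T \<inter> pontryagin_dual"
    unfolding dual_topology_def openin_subtopology by blast
  have "N 0 \<in> T" using eq K(2) by blast
  then obtain F where F: "finite F" "\<forall>p\<in>F. compact (fst p) \<and> open (snd p) \<and> N 0 ` fst p \<subseteq> snd p"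
    "{g. \<forall>p\<in>F. g ` fst p \<subseteq> snd p} \<subseteq> T"
    using gen_nbhd[of T "N 0"] oT unfolding openin_topology_generated_by_iff by blast
  have inj: "inj N" using homeomorphic_imp_injective_map[OF h] by simp
  have P1: "\<forall>p\<in>F. compact (fst p) \<and> open (snd p) \<and> (fst p \<noteq> {} \<longrightarrow> 1 \<in> snd p)"
  proof
    fix p assume p: "p \<in> F"
    have "fst p \<noteq> {} \<longrightarrow> 1 \<in> snd p"
    proof
      assume "fst p \<noteq> {}"
      then obtain c where "c \<in> fst p" by blast
      then have "N 0 c \<in> snd p" using F(2) p by blast
      then show "1 \<in> snd p" by (simp add: ssd_zero1)
    qed
    then show "compact (fst p) \<and> open (snd p) \<and> (fst p \<noteq> {} \<longrightarrow> 1 \<in> snd p)" using F(2) p by blast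
  qed
  have P2: "\<forall>x. (\<forall>p\<in>F. N x ` fst p \<subseteq> snd p) \<longrightarrow> x \<in> K"
  proof (intro allI impI)
    fix x assume "\<forall>p\<in>F. N x ` fst p \<subseteq> snd p"
    then have "N x \<in> T" using F(3) by blast
    moreover have "N x \<in> pontryagin_dual" using ssd_char by (simp add: pontryagin_dual_def)
    ultimately have "N x \<in> N ` K" using eq by blast
    then show "x \<in> K" using inj by (auto dest: injD)
  qed
  show ?thesis using F(1) P1 P2 by blast
qed

lemma perp_compact:
  assumes K: "add_subgroup K" "compact K" "open K"
  shows "compact (perp N K)"
proof -
  have K0: "0 \<in> K" using K(1) by (simp add: add_subgroup_def)
  obtain F where F: "finite F" "\<forall>p\<in>F. compact (fst p) \<and> open (snd p) \<and> (fst p \<noteq> {} \<longrightarrow> 1 \<in> snd p)"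
    and Fx: "\<And>x. (\<forall>p\<in>F. N x ` fst p \<subseteq> snd p) \<Longrightarrow> x \<in> K"
    using inv_nbhd[OF K(3) K0] by blast
  have "\<forall>p\<in>F. \<exists>e>0. (fst p \<noteq> {} \<longrightarrow> ball (1::complex) e \<subseteq> snd p)"
  proof
    fix p assume p: "p \<in> F"
    show "\<exists>e>0. (fst p \<noteq> {} \<longrightarrow> ball (1::complex) e \<subseteq> snd p)"
    proof (cases "fst p = {}")
      case True then show ?thesis using zero_less_one by blast
    next
      case False
      then have "1 \<in> snd p" "open (snd p)" using F(2) p by auto
      then obtain e where "e > 0" "ball 1 e \<subseteq> snd p" using open_contains_ball_eq by blast
      then show ?thesis by blast
    qed
  qed
  moreover have mono: "\<And>p e e'. (fst p \<noteq> {} \<longrightarrow> ball (1::complex) e \<subseteq> snd p) \<Longrightarrow> 0 < e' \<Longrightarrow> e' \<le> e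
      \<Longrightarrow> (fst p \<noteq> {} \<longrightarrow> ball (1::complex) e' \<subseteq> snd p)"
    using subset_ball by blast
  ultimately obtain \<delta> where \<delta>: "\<delta> > 0" "\<forall>p\<in>F. fst p \<noteq> {} \<longrightarrow> ball (1::complex) \<delta> \<subseteq> snd p"
    using finite_uniform_eps[OF F(1), of "\<lambda>p e. fst p \<noteq> {} \<longrightarrow> ball (1::complex) e \<subseteq> snd p"]
    by blast
  define CC where "CC = \<Union>(fst ` F)"
  have cCC: "compact CC" unfolding CC_def using F by (intro compact_Union) auto
  have sub: "CC \<subseteq> (\<Union>c\<in>CC. (+) c ` K)"
  proof
    fix c assume "c \<in> CC"
    moreover have "c \<in> (+) c ` K" using K0 by (metis add.right_neutral image_eqI)
    ultimately show "c \<in> (\<Union>c\<in>CC. (+) c ` K)" by blast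
  qed
  obtain P where P: "P \<subseteq> CC" "finite P" "CC \<subseteq> (\<Union>c\<in>P. (+) c ` K)"
    by (rule compactE_image[OF cCC _ sub], rule translate_open[OF K(3)], blast)
  have sub2: "sphere (0::complex) 1 \<subseteq> (\<Union>a\<in>sphere 0 1. ball a (\<delta>/2))"
  proof
    fix z :: complex assume "z \<in> sphere 0 1"
    moreover have "z \<in> ball z (\<delta>/2)" using \<delta>(1) by simp
    ultimately show "z \<in> (\<Union>a\<in>sphere 0 1. ball a (\<delta>/2))" by blast
  qed
  obtain A where A: "A \<subseteq> sphere 0 1" "finite A" "sphere (0::complex) 1 \<subseteq> (\<Union>a\<in>A. ball a (\<delta>/2))"
    by (rule compactE_image[OF compact_sphere _ sub2], rule open_ball, blast)
  have ex: "\<exists>a. a \<in> A \<and> N x c \<in> ball a (\<delta>/2)" for x c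
  proof -
    have "N x c \<in> sphere 0 1" using ssd_norm by simp
    then show ?thesis using A(3) by blast
  qed
  define sig where "sig x = restrict (\<lambda>c. SOME a. a \<in> A \<and> N x c \<in> ball a (\<delta>/2)) P" for x
  have sigA: "sig x c \<in> A \<and> N x c \<in> ball (sig x c) (\<delta>/2)" if "c \<in> P" for x c
    using someI_ex[OF ex[of x c]] that by (simp add: sig_def)
  have sigP: "sig x \<in> PiE P (\<lambda>_. A)" for x
  proof (rule PiE_I)
    fix c assume "c \<in> P" then show "sig x c \<in> A" using sigA by blast
  next
    fix c assume "c \<notin> P" then show "sig x c = undefined" by (simp add: sig_def)
  qed
  define R where "R = sig ` perp N K"
  have "R \<subseteq> PiE P (\<lambda>_. A)" using sigP unfolding R_def by blast
  moreover have "finite (PiE P (\<lambda>_. A))" by (rule finite_PiE[OF P(2)]) (rule A(2))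
  ultimately have finR: "finite R" by (rule finite_subset)
  define rep where "rep \<sigma> = (SOME y. y \<in> perp N K \<and> sig y = \<sigma>)" for \<sigma>
  have rep: "rep \<sigma> \<in> perp N K \<and> sig (rep \<sigma>) = \<sigma>" if sR: "\<sigma> \<in> R" for \<sigma>
  proof -
    obtain y where "y \<in> perp N K" "\<sigma> = sig y" using sR unfolding R_def by blast
    then have "\<exists>y. y \<in> perp N K \<and> sig y = \<sigma>" by blast
    then show ?thesis unfolding rep_def by (rule someI_ex)
  qed
  have cover: "perp N K \<subseteq> (\<Union>\<sigma>\<in>R. (+) (rep \<sigma>) ` K)"
  proof
    fix x assume x: "x \<in> perp N K"
    define y where "y = rep (sig x)"
    have sx: "sig x \<in> R" using x by (simp add: R_def)
    have y: "y \<in> perp N K" "sig y = sig x" using rep[OF sx] by (auto simp: y_def)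
    have close: "dist (N x c) (N y c) < \<delta>" if "c \<in> P" for c
    proof -
      have "dist (N x c) (sig x c) < \<delta>/2" using sigA[OF that, of x] by (simp add: dist_commute)
      moreover have "dist (N y c) (sig x c) < \<delta>/2" using sigA[OF that, of y] y(2) by (simp add: dist_commute)
      ultimately show ?thesis using dist_triangle_half_l by blast
    qed
    have "x - y \<in> K"
    proof (rule Fx, intro ballI subsetI)
      fix p z assume p: "p \<in> F" and z: "z \<in> N (x - y) ` fst p"
      then obtain q where q: "q \<in> fst p" "z = N (x - y) q" by blast
      then have ne: "fst p \<noteq> {}" by blast
      have "q \<in> CC" using q p by (auto simp: CC_def)
      then obtain c k where ck: "c \<in> P" "k \<in> K" "q = c + k" using P(3) by blast
      have xy: "x - y = x + - y" by simp
      have "N (x - y) k = N x k * cnj (N y k)"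
        by (simp only: xy ssd_add1 ssd_neg1)
      also have "\<dots> = 1" using x y(1) ck(2) by (simp add: perp_def)
      finally have k1: "N (x - y) k = 1" .
      have "z = N (x - y) c" using q ck k1 by (simp add: ssd_add2)
      also have "\<dots> = N x c * cnj (N y c)"
        by (simp only: xy ssd_add1 ssd_neg1)
      finally have "dist 1 z = norm (N x c - N y c)"
        using unit_dist[OF ssd_norm[of y c], of "N x c"] by (simp add: dist_norm norm_minus_commute)
      then have "z \<in> ball 1 \<delta>" using close[OF ck(1)] by (simp add: dist_norm)
      then show "z \<in> snd p" using \<delta>(2) p ne by blast
    qed
    then have "x \<in> (+) y ` K" by (metis add_diff_cancel_left' add.commute image_eqI diff_add_cancel)
    then show "x \<in> (\<Union>\<sigma>\<in>R. (+) (rep \<sigma>) ` K)" using sx by (auto simp: y_def)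
  qed
  have "compact (\<Union>\<sigma>\<in>R. (+) (rep \<sigma>) ` K)"
    by (rule compact_UN[OF finR translate_compact[OF K(2)]])
  then have "compact ((\<Union>\<sigma>\<in>R. (+) (rep \<sigma>) ` K) \<inter> perp N K)"
    by (rule compact_Int_closed[OF _ perp_closed])
  moreover have "(\<Union>\<sigma>\<in>R. (+) (rep \<sigma>) ` K) \<inter> perp N K = perp N K" using cover by blast
  ultimately show ?thesis by simp
qed
end

theorem lemma7p3:
  fixes nabla :: "'a::{topological_group_add, ab_group_add, t2_space} \<Rightarrow> 'a \<Rightarrow> complex"
  assumes "locally_compact_space (euclidean :: 'a topology)"
    and "symplectic_self_duality nabla"
    and "\<exists>H::'a set. add_subgroup H \<and> compact H \<and> open H"
  shows "\<exists>G::'a set. add_subgroup G \<and> compact G \<and> open G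
           \<and> G = {x. \<forall>g\<in>G. nabla x g = 1}"
proof -
  interpret ssdl nabla by (rule ssdl.intro) (rule assms(2))
  obtain H :: "'a set" where H: "add_subgroup H" "compact H" "open H" using assms(3) by blast
  define K where "K = H \<inter> perp nabla H"
  have Ksub: "add_subgroup K" using H(1) perp_subgroup[of H]
    unfolding K_def add_subgroup_def by blast
  have Kc: "compact K" unfolding K_def by (rule compact_Int_closed[OF H(2) perp_closed])
  have Ko: "open K" unfolding K_def by (rule open_Int[OF H(3) perp_open[OF H(1,2)]])
  have Kiso: "\<forall>a\<in>K. \<forall>b\<in>K. nabla a b = 1" unfolding K_def perp_def by blast
  define \<A> where "\<A> = {S. (\<forall>a\<in>S. \<forall>b\<in>S. nabla a b = 1) \<and> K \<subseteq> S}"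
  have "\<A> \<noteq> {}" using Kiso unfolding \<A>_def by blast
  moreover have "\<Union>\<C> \<in> \<A>" if "\<C> \<noteq> {}" "subset.chain \<A> \<C>" for \<C>
  proof -
    have ch: "\<C> \<subseteq> \<A>" "\<forall>X\<in>\<C>. \<forall>Y\<in>\<C>. X \<subseteq> Y \<or> Y \<subseteq> X" using that(2) by (auto simp: subset_chain_def)
    have "\<forall>a\<in>\<Union>\<C>. \<forall>b\<in>\<Union>\<C>. nabla a b = 1"
    proof (intro ballI)
      fix a b assume "a \<in> \<Union>\<C>" "b \<in> \<Union>\<C>"
      then obtain X Y where XY: "X \<in> \<C>" "Y \<in> \<C>" "a \<in> X" "b \<in> Y" by blast
      then have "X \<subseteq> Y \<or> Y \<subseteq> X" using ch(2) by blast
      moreover have "X \<in> \<A>" "Y \<in> \<A>" using XY ch(1) by auto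
      ultimately show "nabla a b = 1" using XY unfolding \<A>_def by blast
    qed
    moreover have "K \<subseteq> \<Union>\<C>" using that(1) ch(1) unfolding \<A>_def by blast
    ultimately show ?thesis unfolding \<A>_def by blast
  qed
  ultimately obtain M where M: "M \<in> \<A>" and Mmax: "\<forall>X\<in>\<A>. M \<subseteq> X \<longrightarrow> X = M"
    using subset_Zorn_nonempty[of \<A>] by blast
  have Miso: "\<forall>a\<in>M. \<forall>b\<in>M. nabla a b = 1" and KM: "K \<subseteq> M" using M unfolding \<A>_def by auto
  have Meq: "M = perp nabla M"
  proof
    show "M \<subseteq> perp nabla M" using Miso unfolding perp_def by blast
  next
    show "perp nabla M \<subseteq> M"
    proof
      fix x assume x: "x \<in> perp nabla M"
      have xg: "nabla x g = 1" if "g \<in> M" for g using x that unfolding perp_def by blast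
      have gx: "nabla g x = 1" if "g \<in> M" for g
        using ssd_antisym[of x g] xg[OF that] by simp
      have "\<forall>a\<in>insert x M. \<forall>b\<in>insert x M. nabla a b = 1"
        using Miso xg gx ssd_alt[of x] by blast
      then have "insert x M \<in> \<A>" using KM unfolding \<A>_def by blast
      then have "insert x M = M" using Mmax by blast
      then show "x \<in> M" by blast
    qed
  qed
  have Msub: "add_subgroup M" using Meq perp_subgroup[of M] by simp
  have Mcl: "closed M" using Meq perp_closed[of M] by simp
  have "M \<subseteq> perp nabla K" using Miso KM unfolding perp_def by blast
  then have "M = perp nabla K \<inter> M" by blast
  also have "compact \<dots>" by (rule compact_Int_closed[OF perp_compact[OF Ksub Kc Ko] Mcl])
  finally have Mc: "compact M" .
  have "M = (\<Union>x\<in>M. (+) x ` K)"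
  proof
    show "M \<subseteq> (\<Union>x\<in>M. (+) x ` K)"
    proof
      fix x assume "x \<in> M"
      moreover have "0 \<in> K" using Ksub by (simp add: add_subgroup_def)
      ultimately show "x \<in> (\<Union>x\<in>M. (+) x ` K)" by (metis UN_iff add.right_neutral image_eqI)
    qed
  next
    show "(\<Union>x\<in>M. (+) x ` K) \<subseteq> M" using Msub KM unfolding add_subgroup_def by blast
  qed
  moreover have "open (\<Union>x\<in>M. (+) x ` K)" using translate_open[OF Ko] by blast
  ultimately have Mo: "open M" by simp
  show ?thesis
    by (rule exI[of _ M]) (use Msub Mc Mo Meq in \<open>simp add: perp_def\<close>)
qed

end
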